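(* Let $R,R'$ be commutative rings, $S\subseteq R$ a multiplicatively closed set, and $\phi^*:R\to R'$, $\psi^*:R'\to S^{-1}R$ ring homomorphisms such that $\psi^*(\phi^*(f))=f/1$ for all $f\in R$. Let $I'\subseteq R'$ be a prime ideal with generators $f'_1,\dots,f'_k$, write $\psi^*(f'_i)=g_i/h_i$ with $g_i\in R$, $h_i\in S$, and set $I=(\phi^* )^{-1}(I')$ and $J=\langle g_1,\dots,g_k\rangle\subseteq R$. If $J\subseteq I$ and $I\cap S=\emptyset$, then $I=J:S$.
   Context: For an ideal $J$ and multiplicatively closed set $S$ in $R$, the saturation is $J:S=\{f\in R: fs\in J \text{ for some } s\in S\}$. $S^{-1}R$ is the localization of $R$ at $S$. *)

theory Defs
  imports Main
begin

definition ring_hom :: "('a::comm_ring_1 \<Rightarrow> 'b::comm_ring_1) \<Rightarrow> bool" where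
  "ring_hom f \<longleftrightarrow> f 1 = 1 \<and> (\<forall>x y. f (x + y) = f x + f y) \<and> (\<forall>x y. f (x * y) = f x * f y)"

definition ideal :: "'a::comm_ring_1 set \<Rightarrow> bool" where
  "ideal I \<longleftrightarrow> 0 \<in> I \<and> (\<forall>x\<in>I. \<forall>y\<in>I. x + y \<in> I) \<and> (\<forall>r. \<forall>x\<in>I. r * x \<in> I)"

definition prime_ideal :: "'a::comm_ring_1 set \<Rightarrow> bool" where
  "prime_ideal I \<longleftrightarrow> ideal I \<and> I \<noteq> UNIV \<and> (\<forall>a b. a * b \<in> I \<longrightarrow> a \<in> I \<or> b \<in> I)"

definition ideal_gen :: "(nat \<Rightarrow> 'a::comm_ring_1) \<Rightarrow> nat \<Rightarrow> 'a set" where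
  "ideal_gen f k = {x. \<exists>c. x = (\<Sum>i<k. c i * f i)}"

definition mult_closed :: "'a::comm_ring_1 set \<Rightarrow> bool" where
  "mult_closed S \<longleftrightarrow> 1 \<in> S \<and> (\<forall>x\<in>S. \<forall>y\<in>S. x * y \<in> S)"

definition saturation :: "'a::comm_ring_1 set \<Rightarrow> 'a set \<Rightarrow> 'a set" where
  "saturation J S = {f. \<exists>s\<in>S. f * s \<in> J}"

text \<open>loc : R -> L exhibits L as the localization S^{-1}R, with loc f = f/1
  (standard characterization of the localization up to unique isomorphism).\<close>
definition is_localization :: "'a::comm_ring_1 set \<Rightarrow> ('a \<Rightarrow> 'c::comm_ring_1) \<Rightarrow> bool" where
  "is_localization S loc \<longleftrightarrow> ring_hom loc
     \<and> (\<forall>s\<in>S. \<exists>u. loc s * u = 1)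
     \<and> (\<forall>x. \<exists>g. \<exists>h\<in>S. x * loc h = loc g)
     \<and> (\<forall>a. loc a = 0 \<longleftrightarrow> (\<exists>s\<in>S. s * a = 0))"

end

theory Submission
  imports Defs
begin

lemma ideal_gen_ideal: "ideal (ideal_gen g k)"
  unfolding ideal_def ideal_gen_def
proof (intro conjI ballI allI)
  show "0 \<in> {x. \<exists>c. x = (\<Sum>i<k. c i * g i)}"
    by (rule CollectI, rule exI[of _ "\<lambda>_. 0"]) simp
next
  fix x y assume "x \<in> {x. \<exists>c. x = (\<Sum>i<k. c i * g i)}" "y \<in> {x. \<exists>c. x = (\<Sum>i<k. c i * g i)}"
  then obtain c d where "x = (\<Sum>i<k. c i * g i)" "y = (\<Sum>i<k. d i * g i)" by auto
  then have "x + y = (\<Sum>i<k. (c i + d i) * g i)" by (simp add: sum.distrib distrib_right)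
  then show "x + y \<in> {x. \<exists>c. x = (\<Sum>i<k. c i * g i)}" by (intro CollectI exI)
next
  fix r x assume "x \<in> {x. \<exists>c. x = (\<Sum>i<k. c i * g i)}"
  then obtain c where "x = (\<Sum>i<k. c i * g i)" by auto
  then have "r * x = (\<Sum>i<k. (r * c i) * g i)" by (simp add: sum_distrib_left mult.assoc)
  then show "r * x \<in> {x. \<exists>c. x = (\<Sum>i<k. c i * g i)}" by (intro CollectI exI)
qed

lemma ideal_gen_mem: "i < k \<Longrightarrow> g i \<in> ideal_gen g k"
  unfolding ideal_gen_def
proof (rule CollectI, rule exI[of _ "\<lambda>j. if j = i then 1 else 0"])
  assume "i < k"
  have "(\<Sum>j<k. (if j = i then 1 else 0) * g j) = (\<Sum>j<k. if j = i then g j else 0)"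
    by (rule sum.cong) auto
  also have "\<dots> = g i" using \<open>i < k\<close> by (simp add: sum.delta)
  finally show "g i = (\<Sum>j<k. (if j = i then 1 else 0) * g j)" by simp
qed

lemma ring_hom_0: "ring_hom f \<Longrightarrow> f 0 = 0"
  unfolding ring_hom_def by (metis add.right_neutral add_left_cancel)

lemma ring_hom_diff: "ring_hom f \<Longrightarrow> f (a - b) = f a - f b"
  unfolding ring_hom_def by (metis add_diff_cancel diff_add_cancel)

lemma ring_hom_sum: "ring_hom f \<Longrightarrow> f (\<Sum>i<(n::nat). c i) = (\<Sum>i<n. f (c i))"
  by (induction n) (auto simp: ring_hom_0, simp add: ring_hom_def)

theorem lemma4p7:
  fixes S :: "'a::comm_ring_1 set"
    and loc :: "'a \<Rightarrow> 'c::comm_ring_1"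
    and phi :: "'a \<Rightarrow> 'b::comm_ring_1"
    and psi :: "'b \<Rightarrow> 'c"
    and I' :: "'b set"
    and f' :: "nat \<Rightarrow> 'b"
    and g h :: "nat \<Rightarrow> 'a"
    and k :: nat
  assumes "mult_closed S"
    and "is_localization S loc"
    and "ring_hom phi"
    and "ring_hom psi"
    and "\<forall>f. psi (phi f) = loc f"
    and "prime_ideal I'"
    and "I' = ideal_gen f' k"
    and "\<forall>i<k. h i \<in> S \<and> psi (f' i) * loc (h i) = loc (g i)"
    and "ideal_gen g k \<subseteq> phi -` I'"
    and "phi -` I' \<inter> S = {}"
  shows "phi -` I' = saturation (ideal_gen g k) S"
proof
  define J where "J = ideal_gen g k"
  have J: "ideal J" unfolding J_def by (rule ideal_gen_ideal)
  have S1: "1 \<in> S" and Sm: "\<And>x y. x \<in> S \<Longrightarrow> y \<in> S \<Longrightarrow> x * y \<in> S"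
    using assms(1) unfolding mult_closed_def by auto
  have lh: "ring_hom loc" and lfrac: "\<And>x. \<exists>g. \<exists>h\<in>S. x * loc h = loc g"
    and lz: "\<And>a. loc a = 0 \<Longrightarrow> \<exists>s\<in>S. s * a = 0"
    using assms(2) unfolding is_localization_def by auto
  have lmul: "\<And>x y. loc (x * y) = loc x * loc y" and ladd: "\<And>x y. loc (x + y) = loc x + loc y"
    and l1: "loc 1 = 1"
    using lh unfolding ring_hom_def by auto
  have psimul: "\<And>x y. psi (x * y) = psi x * psi y"
    using assms(4) unfolding ring_hom_def by auto
  have Jadd: "\<And>x y. x \<in> J \<Longrightarrow> y \<in> J \<Longrightarrow> x + y \<in> J"
    and Jmul: "\<And>r x. x \<in> J \<Longrightarrow> r * x \<in> J" and J0: "0 \<in> J"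
    using J unfolding ideal_def by auto
  have key: "\<And>c n. n \<le> k \<Longrightarrow> \<exists>t\<in>S. \<exists>x\<in>J. loc t * (\<Sum>i<n. psi (c i) * psi (f' i)) = loc x"
  proof -
    fix c :: "nat \<Rightarrow> 'b" and n
    show "n \<le> k \<Longrightarrow> \<exists>t\<in>S. \<exists>x\<in>J. loc t * (\<Sum>i<n. psi (c i) * psi (f' i)) = loc x"
    proof (induction n)
      case 0
      show ?case using S1 J0 ring_hom_0[OF lh] by (intro bexI[of _ 1] bexI[of _ 0]) auto
    next
      case (Suc n)
      then obtain t x where t: "t \<in> S" and x: "x \<in> J"
        and tx: "loc t * (\<Sum>i<n. psi (c i) * psi (f' i)) = loc x" by auto
      obtain e d where d: "d \<in> S" and de: "psi (c n) * loc d = loc e" using lfrac by blast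
      have hn: "h n \<in> S" and hg: "psi (f' n) * loc (h n) = loc (g n)" using assms(8) Suc.prems by auto
      have gJ: "g n \<in> J" unfolding J_def using Suc.prems by (intro ideal_gen_mem) simp
      have "loc (t * d * h n) * (\<Sum>i<Suc n. psi (c i) * psi (f' i))
          = loc (d * h n) * (loc t * (\<Sum>i<n. psi (c i) * psi (f' i)))
            + loc t * (psi (c n) * loc d) * (psi (f' n) * loc (h n))"
        by (simp only: sum.lessThan_Suc lmul distrib_left) (simp only: mult_ac)
      also have "\<dots> = loc (d * h n * x + t * e * g n)"
        by (simp add: tx de hg lmul ladd)
      finally have eq: "loc (t * d * h n) * (\<Sum>i<Suc n. psi (c i) * psi (f' i)) = loc (d * h n * x + t * e * g n)" .
      have "t * d * h n \<in> S" using Sm t d hn by blast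
      moreover have "d * h n * x + t * e * g n \<in> J" using Jadd Jmul x gJ by blast
      ultimately show ?case using eq by blast
    qed
  qed
  show "phi -` I' \<subseteq> saturation (ideal_gen g k) S"
  proof
    fix f assume "f \<in> phi -` I'"
    then obtain c where c: "phi f = (\<Sum>i<k. c i * f' i)" using assms(7) unfolding ideal_gen_def by auto
    have "loc f = psi (phi f)" using assms(5) by simp
    also have "\<dots> = (\<Sum>i<k. psi (c i * f' i))" unfolding c by (rule ring_hom_sum[OF assms(4)])
    also have "\<dots> = (\<Sum>i<k. psi (c i) * psi (f' i))" by (simp only: psimul)
    finally have "loc f = (\<Sum>i<k. psi (c i) * psi (f' i))" .
    with key[of k c] obtain t x where t: "t \<in> S" and x: "x \<in> J" and tx: "loc t * loc f = loc x" by auto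
    have "loc (f * t - x) = 0" using tx by (simp add: ring_hom_diff[OF lh] lmul mult.commute)
    then obtain s where s: "s \<in> S" "s * (f * t - x) = 0" using lz by blast
    then have "f * (t * s) = s * x" by (simp add: algebra_simps)
    then have "f * (t * s) \<in> J" using Jmul x by simp
    then show "f \<in> saturation (ideal_gen g k) S" unfolding saturation_def J_def using Sm t s by blast
  qed
  show "saturation (ideal_gen g k) S \<subseteq> phi -` I'"
  proof
    fix f assume "f \<in> saturation (ideal_gen g k) S"
    then obtain s where s: "s \<in> S" "f * s \<in> ideal_gen g k" unfolding saturation_def by auto
    then have "phi f * phi s \<in> I'" using assms(9) assms(3) unfolding ring_hom_def by auto
    then have "phi f \<in> I' \<or> phi s \<in> I'" using assms(6) unfolding prime_ideal_def by auto
    then show "f \<in> phi -` I'" using s assms(10) by auto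
  qed
qed

end
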